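(* Let $\mu$ be a Borel probability measure on $\mathbb{R}^n$, let $D>0$, and define $\theta_D(x)=\frac{1}{4D^2}|x|^2$ if $|x|\le D$ and $\theta_D(x)=+\infty$ if $|x|>D$, for $x\in\mathbb{R}^n$. For $\varphi:\mathbb{R}^n\to\mathbb{R}$ let $Q_1^{\theta_D}\varphi(x)=\inf\{\varphi(y)+\theta_D(x-y):y\in\mathbb{R}^n\}$. (a) If $|x-y|\le D$ for all $x,y\in\operatorname{supp}\mu$, then for every convex function $\varphi:\mathbb{R}^n\to\mathbb{R}$ bounded from below, $$\int_{\mathbb{R}^n}e^{Q_1^{\theta_D}\varphi}\,d\mu\int_{\mathbb{R}^n}e^{-\varphi}\,d\mu\le1.$$ (b) Conversely, if the inequality in (a) holds for every convex function $\varphi:\mathbb{R}^n\to\mathbb{R}$ bounded from below, then $|x-y|\le D$ for all $x,y\in\operatorname{supp}\mu$.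
   Context: $|\cdot|$ denotes the Euclidean norm on $\mathbb{R}^n$; $\operatorname{supp}\mu$ is the support of $\mu$. *)

theory Defs
  imports "HOL-Analysis.Analysis" "HOL-Probability.Probability"
begin

definition msupp :: "'a::euclidean_space measure \<Rightarrow> 'a set" where
  "msupp M = {x. \<forall>e>0. emeasure M (ball x e) > 0}"

definition theta :: "real \<Rightarrow> 'a::euclidean_space \<Rightarrow> ereal" where
  "theta D x = (if norm x \<le> D then ereal ((norm x)\<^sup>2 / (4 * D\<^sup>2)) else \<infinity>)"

definition Q1 :: "real \<Rightarrow> ('a::euclidean_space \<Rightarrow> real) \<Rightarrow> 'a \<Rightarrow> ereal" where
  "Q1 D \<phi> x = (INF y. ereal (\<phi> y) + theta D (x - y))"

end

theory Submission
  imports Defs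
begin
lemma h_lb_small:
  fixes s :: real assumes "0 < s" "s \<le> 1"
  shows "(s - 1)\<^sup>2 / 2 \<le> s * ln s - s + 1"
proof -
  let ?f = "\<lambda>x::real. x * ln x - x + 1 - (x - 1)\<^sup>2 / 2"
  have "?f 1 \<le> ?f s"
  proof (rule DERIV_nonpos_imp_nonincreasing[OF assms(2)])
    fix x assume x: "s \<le> x" "x \<le> 1"
    hence xp: "x > 0" using assms by auto
    have "DERIV ?f x :> (ln x + 1 - x)"
      using xp by (auto intro!: derivative_eq_intros simp: power2_eq_square field_simps)
    moreover have "ln x + 1 - x \<le> 0" using ln_le_minus_one[OF xp] by simp
    ultimately show "\<exists>y. DERIV ?f x :> y \<and> y \<le> 0" by blast
  qed
  thus ?thesis by simp
qed

lemma h_lb_big: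
  fixes s :: real assumes "1 \<le> s"
  shows "(s - 1)\<^sup>2 / (2 * s) \<le> s * ln s - s + 1"
proof -
  let ?f = "\<lambda>x::real. x * ln x - x + 1 - (x - 1)\<^sup>2 / (2 * x)"
  have "?f 1 \<le> ?f s"
  proof (rule DERIV_nonneg_imp_nondecreasing[OF assms(1)])
    fix x assume x: "1 \<le> x" "x \<le> s"
    hence xp: "x > 0" by auto
    have "DERIV ?f x :> (ln x - (x\<^sup>2 - 1) / (2 * x\<^sup>2))"
      using xp by (auto intro!: derivative_eq_intros simp: power2_eq_square field_simps)
    moreover have "ln x - (x\<^sup>2 - 1) / (2 * x\<^sup>2) \<ge> 0"
    proof -
      have "ln (1/x) \<le> 1/x - 1" using ln_le_minus_one[of "1/x"] xp by simp
      hence l: "ln x \<ge> 1 - 1/x" using xp by (simp add: ln_div)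
      have sq: "0 \<le> (x - 1)\<^sup>2" by simp
      have "(x\<^sup>2 - 1) / (2 * x\<^sup>2) \<le> 1 - 1/x"
      proof -
        have "x * 2 \<le> 1 + x * x" using sq by (simp add: power2_eq_square algebra_simps)
        hence "x * (x * 2) \<le> x * (1 + x * x)" using xp by (intro mult_left_mono) auto
        thus ?thesis using xp by (simp add: field_simps power2_eq_square)
      qed
      thus ?thesis using l by linarith
    qed
    ultimately show "\<exists>y. DERIV ?f x :> y \<and> y \<ge> 0" by blast
  qed
  thus ?thesis by simp
qed

lemma scalar_key:
  fixes a b :: real assumes "0 < a" "0 < b"
  shows "(max (a - b) 0)\<^sup>2 / (4 * a) \<le> a * ln a + b * ln b - a - b + 2"
proof (cases "a \<le> b")
  case True
  have "0 \<le> a * ln a - a + 1"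
    using h_lb_small[of a] h_lb_big[of a] assms
    by (smt (verit, ccfv_SIG) divide_nonneg_pos zero_le_power2)
  moreover have "0 \<le> b * ln b - b + 1"
    using h_lb_small[of b] h_lb_big[of b] assms
    by (smt (verit, ccfv_SIG) divide_nonneg_pos zero_le_power2)
  ultimately show ?thesis using True by simp
next
  case False
  hence m: "max (a - b) 0 = a - b" by simp
  show ?thesis
  proof (cases "a \<le> 1")
    case a1: True
    have ha: "(a - 1)\<^sup>2 / 2 \<le> a * ln a - a + 1" using h_lb_small assms a1 by blast
    have hb: "(b - 1)\<^sup>2 / 2 \<le> b * ln b - b + 1" using h_lb_small assms a1 False by simp
    have "(a - b)\<^sup>2 / (4 * a) \<le> (a - 1)\<^sup>2 / 2 + (b - 1)\<^sup>2 / 2"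
    proof (cases "a \<ge> 1/2")
      case True
      have "(a - b)\<^sup>2 / (4 * a) \<le> (a - b)\<^sup>2 / 2"
        using True assms by (intro frac_le) auto
      also have "\<dots> \<le> (1 - b)\<^sup>2 / 2" using False a1 assms
        by (intro divide_right_mono power_mono) auto
      also have "\<dots> = (b - 1)\<^sup>2 / 2" by (simp add: power2_commute)
      finally show ?thesis by (simp add: add_increasing)
    next
      case af: False
      have "(a - b)\<^sup>2 \<le> a\<^sup>2" using assms False by (intro power_mono) auto
      hence "(a - b)\<^sup>2 / (4 * a) \<le> a\<^sup>2 / (4 * a)" using assms by (intro divide_right_mono) auto
      also have "\<dots> = a / 4" using assms by (simp add: power2_eq_square)
      also have "\<dots> \<le> (1/2)\<^sup>2 / 2" using af by (simp add: power2_eq_square)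
      also have "\<dots> \<le> (1 - b)\<^sup>2 / 2" using af False assms by (intro divide_right_mono power_mono) auto
      also have "\<dots> = (b - 1)\<^sup>2 / 2" by (simp add: power2_commute)
      finally show ?thesis by (simp add: add_increasing)
    qed
    thus ?thesis using ha hb unfolding m by linarith
  next
    case a1: False
    have ha: "(a - 1)\<^sup>2 / (2 * a) \<le> a * ln a - a + 1" using h_lb_big a1 by simp
    show ?thesis
    proof (cases "b \<le> 1")
      case b1: True
      have hb: "(b - 1)\<^sup>2 / 2 \<le> b * ln b - b + 1" using h_lb_small assms b1 by blast
      have "(a - b)\<^sup>2 / (4 * a) \<le> (a - 1)\<^sup>2 / (2 * a) + (b - 1)\<^sup>2 / 2"
      proof -
        have "0 \<le> ((a - 1) - (b - 1))\<^sup>2 + 0" by simp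
        have "(a - b)\<^sup>2 \<le> 2 * ((a - 1)\<^sup>2 + (b - 1)\<^sup>2)"
          using sum_squares_ge_zero[of "a + b - 2" 0] by (simp add: power2_eq_square algebra_simps)
        hence "(a - b)\<^sup>2 / (4 * a) \<le> (a - 1)\<^sup>2 / (2 * a) + (b - 1)\<^sup>2 / (2 * a)"
          using assms by (simp add: field_simps)
        moreover have "(b - 1)\<^sup>2 / (2 * a) \<le> (b - 1)\<^sup>2 / 2"
          using a1 by (intro frac_le) auto
        ultimately show ?thesis by linarith
      qed
      thus ?thesis using ha hb unfolding m by linarith
    next
      case b1: False
      have hb: "0 \<le> b * ln b - b + 1"
        using h_lb_big[of b] b1 by (smt (verit) divide_nonneg_pos zero_le_power2)
      have "(a - b)\<^sup>2 / (4 * a) \<le> (a - 1)\<^sup>2 / (2 * a)"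
      proof -
        have "(a - b)\<^sup>2 \<le> (a - 1)\<^sup>2" using False b1 by (simp add: power_mono)
        moreover have "(a - b)\<^sup>2 / (4 * a) \<le> (a - b)\<^sup>2 / (2 * a)"
          using assms by (intro frac_le) auto
        moreover have "(a - b)\<^sup>2 / (2 * a) \<le> (a - 1)\<^sup>2 / (2 * a)"
          using assms calculation by (intro divide_right_mono) auto
        ultimately show ?thesis by linarith
      qed
      thus ?thesis using ha hb unfolding m by linarith
    qed
  qed
qed

lemma Q1_le: "Q1 D \<phi> x \<le> ereal (\<phi> x)" if "D > 0"
proof -
  have "Q1 D \<phi> x \<le> ereal (\<phi> x) + theta D (x - x)"
    unfolding Q1_def by (rule INF_lower) simp
  also have "theta D (x - x) = 0" using that unfolding theta_def by (simp add: zero_ereal_def)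
  finally show ?thesis by simp
qed

lemma theta_nonneg: "0 \<le> theta D h"
  unfolding theta_def by auto

lemma Q1_ge: assumes "\<And>y. c0 \<le> \<phi> y" shows "ereal c0 \<le> Q1 D \<phi> x"
  unfolding Q1_def
proof (rule INF_greatest)
  fix y
  have "ereal c0 \<le> ereal (\<phi> y)" using assms by simp
  also have "\<dots> \<le> ereal (\<phi> y) + theta D (x - y)" using theta_nonneg[of D "x - y"]
    by (simp add: add_increasing2)
  finally show "ereal c0 \<le> ereal (\<phi> y) + theta D (x - y)" .
qed

lemma Q1_real:
  assumes "D > 0" "\<And>y. c0 \<le> \<phi> y"
  shows "Q1 D \<phi> x = ereal (real_of_ereal (Q1 D \<phi> x))"
    and "c0 \<le> real_of_ereal (Q1 D \<phi> x)"
    and "real_of_ereal (Q1 D \<phi> x) \<le> \<phi> x"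
proof -
  have a: "ereal c0 \<le> Q1 D \<phi> x" by (rule Q1_ge[OF assms(2)])
  have b: "Q1 D \<phi> x \<le> ereal (\<phi> x)" by (rule Q1_le[OF assms(1)])
  have f: "\<bar>Q1 D \<phi> x\<bar> \<noteq> \<infinity>" using a b by auto
  show "Q1 D \<phi> x = ereal (real_of_ereal (Q1 D \<phi> x))" using f by (simp add: ereal_real')
  show "c0 \<le> real_of_ereal (Q1 D \<phi> x)" using a f
    by (metis ereal_less_eq(3) real_of_ereal.simps(1) \<open>Q1 D \<phi> x = ereal (real_of_ereal (Q1 D \<phi> x))\<close>)
  show "real_of_ereal (Q1 D \<phi> x) \<le> \<phi> x" using b f
    by (metis ereal_less_eq(3) \<open>Q1 D \<phi> x = ereal (real_of_ereal (Q1 D \<phi> x))\<close>)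
qed

lemma Q1_upper:
  assumes "D > 0" "\<And>y. c0 \<le> \<phi> y" "norm (x - y) \<le> D"
  shows "real_of_ereal (Q1 D \<phi> x) \<le> \<phi> y + (norm (x - y))\<^sup>2 / (4 * D\<^sup>2)"
proof -
  have "Q1 D \<phi> x \<le> ereal (\<phi> y) + theta D (x - y)"
    unfolding Q1_def by (rule INF_lower) simp
  also have "\<dots> = ereal (\<phi> y + (norm (x - y))\<^sup>2 / (4 * D\<^sup>2))"
    using assms(3) unfolding theta_def by simp
  finally show ?thesis using Q1_real(1)[of D c0 \<phi> x] assms(1,2)
    by (metis ereal_less_eq(3))
qed

lemma Q1_less_iff:
  assumes "D > 0" "\<And>y. c0 \<le> \<phi> y"
  shows "real_of_ereal (Q1 D \<phi> x) < a \<longleftrightarrow>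
    (\<exists>h. norm h \<le> D \<and> \<phi> (x - h) + (norm h)\<^sup>2 / (4 * D\<^sup>2) < a)"
proof -
  have "real_of_ereal (Q1 D \<phi> x) < a \<longleftrightarrow> Q1 D \<phi> x < ereal a"
    using Q1_real(1)[of D c0 \<phi> x] assms by (metis less_ereal.simps(1))
  also have "\<dots> \<longleftrightarrow> (\<exists>y. ereal (\<phi> y) + theta D (x - y) < ereal a)"
    unfolding Q1_def by (simp add: INF_less_iff)
  also have "\<dots> \<longleftrightarrow> (\<exists>h. norm h \<le> D \<and> \<phi> (x - h) + (norm h)\<^sup>2 / (4 * D\<^sup>2) < a)"
  proof
    assume "\<exists>y. ereal (\<phi> y) + theta D (x - y) < ereal a"
    then obtain y where y: "ereal (\<phi> y) + theta D (x - y) < ereal a" by blast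
    hence "norm (x - y) \<le> D" unfolding theta_def by (cases "norm (x - y) \<le> D") auto
    moreover have "\<phi> (x - (x - y)) + (norm (x - y))\<^sup>2 / (4 * D\<^sup>2) < a"
      using y calculation unfolding theta_def by simp
    ultimately show "\<exists>h. norm h \<le> D \<and> \<phi> (x - h) + (norm h)\<^sup>2 / (4 * D\<^sup>2) < a" by blast
  next
    assume "\<exists>h. norm h \<le> D \<and> \<phi> (x - h) + (norm h)\<^sup>2 / (4 * D\<^sup>2) < a"
    then obtain h where h: "norm h \<le> D" "\<phi> (x - h) + (norm h)\<^sup>2 / (4 * D\<^sup>2) < a" by blast
    have "ereal (\<phi> (x - h)) + theta D (x - (x - h)) < ereal a"
      using h unfolding theta_def by simp
    thus "\<exists>y. ereal (\<phi> y) + theta D (x - y) < ereal a" by blast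
  qed
  finally show ?thesis .
qed

lemma Q1_measurable:
  fixes \<phi> :: "'a::euclidean_space \<Rightarrow> real"
  assumes "D > 0" "\<And>y. c0 \<le> \<phi> y" and cont: "continuous_on UNIV \<phi>"
  shows "(\<lambda>x. real_of_ereal (Q1 D \<phi> x)) \<in> borel_measurable borel"
proof (subst borel_measurable_iff_less, intro allI)
  fix a
  have "{x. real_of_ereal (Q1 D \<phi> x) < a} = (\<Union>h\<in>cball 0 D. {x. \<phi> (x - h) + (norm h)\<^sup>2 / (4 * D\<^sup>2) < a})"
    using Q1_less_iff[of D c0 \<phi>] assms(1,2) by auto
  moreover have "open (\<Union>h\<in>cball 0 D. {x. \<phi> (x - h) + (norm h)\<^sup>2 / (4 * D\<^sup>2) < a})"
  proof (intro open_UN ballI)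
    fix h :: 'a
    have "continuous_on UNIV (\<lambda>x. \<phi> (x - h) + (norm h)\<^sup>2 / (4 * D\<^sup>2))"
      by (intro continuous_intros continuous_on_compose2[OF cont]) auto
    thus "open {x. \<phi> (x - h) + (norm h)\<^sup>2 / (4 * D\<^sup>2) < a}"
      by (intro open_Collect_less) (auto intro: continuous_on_const)
  qed
  ultimately show "{x \<in> space borel. real_of_ereal (Q1 D \<phi> x) < a} \<in> sets borel"
    by simp
qed

lemma pointwise_key:
  fixes \<phi> :: "'a::euclidean_space \<Rightarrow> real"
  assumes D: "D > 0" and c0: "\<And>y. c0 \<le> \<phi> y" and cv: "convex_on UNIV \<phi>"
    and xb: "norm (x - b) \<le> D" and F: "F > 0" and Z: "Z > 0"
  defines "g1 \<equiv> exp (real_of_ereal (Q1 D \<phi> x)) / F" and "g2 \<equiv> exp (- \<phi> x) / Z"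
  shows "ln F * g1 + ln Z * g2 \<le> max (g1 - g2) 0 * \<phi> b - max (g2 - g1) 0 * \<phi> x + 2 - g1 - g2"
proof -
  define q where "q = real_of_ereal (Q1 D \<phi> x)"
  define N where "N = max (g1 - g2) 0"
  define P where "P = max (g2 - g1) 0"
  have g1p: "g1 > 0" and g2p: "g2 > 0" unfolding g1_def g2_def using F Z by auto
  define t where "t = N / g1"
  have t0: "0 \<le> t" and t1: "t \<le> 1" unfolding t_def N_def using g1p g2p by (auto simp: field_simps)
  define y where "y = (1 - t) *\<^sub>R x + t *\<^sub>R b"
  have xy: "x - y = t *\<^sub>R (x - b)" unfolding y_def by (simp add: algebra_simps)
  have nxy: "norm (x - y) = t * norm (x - b)" using t0 xy by simp
  have "norm (x - y) \<le> D" using nxy t0 t1 xb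
    by (metis mult_le_one norm_ge_zero order_trans mult_left_le_one_le)
  hence q1: "q \<le> \<phi> y + (norm (x - y))\<^sup>2 / (4 * D\<^sup>2)"
    unfolding q_def by (rule Q1_upper[OF D c0])
  have q2: "\<phi> y \<le> (1 - t) * \<phi> x + t * \<phi> b"
    using cv t0 t1 unfolding y_def convex_on_def by auto
  have "(norm (x - y))\<^sup>2 = t\<^sup>2 * (norm (x - b))\<^sup>2" using nxy by (simp add: power_mult_distrib)
  also have "\<dots> \<le> t\<^sup>2 * D\<^sup>2" using xb by (intro mult_left_mono power_mono) auto
  finally have "(norm (x - y))\<^sup>2 / (4 * D\<^sup>2) \<le> t\<^sup>2 * D\<^sup>2 / (4 * D\<^sup>2)"
    using D by (intro divide_right_mono) auto
  also have "\<dots> = t\<^sup>2 / 4" using D by (simp add: field_simps)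
  finally have q3: "q \<le> (1 - t) * \<phi> x + t * \<phi> b + t\<^sup>2 / 4" using q1 q2 by linarith
  have "q * g1 \<le> ((1 - t) * \<phi> x + t * \<phi> b + t\<^sup>2 / 4) * g1"
    using q3 g1p by (intro mult_right_mono) auto
  also have "\<dots> = (g1 - N) * \<phi> x + N * \<phi> b + N\<^sup>2 / (4 * g1)"
    unfolding t_def using g1p by (simp add: field_simps power2_eq_square)
  also have "g1 - N = g2 - P" unfolding N_def P_def by auto
  finally have A: "q * g1 \<le> (g2 - P) * \<phi> x + N * \<phi> b + N\<^sup>2 / (4 * g1)" .
  have B: "N\<^sup>2 / (4 * g1) \<le> g1 * ln g1 + g2 * ln g2 - g1 - g2 + 2"
    unfolding N_def by (rule scalar_key[OF g1p g2p])
  have lg1: "ln g1 = q - ln F" unfolding g1_def q_def using F by (simp add: ln_div)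
  have lg2: "ln g2 = - \<phi> x - ln Z" unfolding g2_def using Z by (simp add: ln_div)
  have "q * g1 = g1 * ln g1 + ln F * g1" unfolding lg1 by (simp add: algebra_simps)
  moreover have "g2 * \<phi> x = - g2 * ln g2 - ln Z * g2" unfolding lg2 by (simp add: algebra_simps)
  ultimately show ?thesis using A B unfolding N_def[symmetric] P_def[symmetric]
    by (simp add: algebra_simps)
qed

lemma convex_subgrad:
  fixes \<phi> :: "'a::euclidean_space \<Rightarrow> real"
  assumes cv: "convex_on UNIV \<phi>"
  shows "\<exists>v. \<forall>z. \<phi> b + v \<bullet> (z - b) \<le> \<phi> z"
proof -
  define S where "S = {p :: 'a \<times> real. \<phi> (fst p + b) < snd p + \<phi> b}"
  have "convex S"
  proof (rule convexI)
    fix p1 p2 :: "'a \<times> real" and u v :: real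
    assume p1': "p1 \<in> S" and p2': "p2 \<in> S" and uv1: "0 \<le> u" "0 \<le> v" "u + v = 1"
    have p1: "\<phi> (fst p1 + b) < snd p1 + \<phi> b" using p1' unfolding S_def by simp
    have p2: "\<phi> (fst p2 + b) < snd p2 + \<phi> b" using p2' unfolding S_def by simp
    have uv: "0 \<le> u \<and> 0 \<le> v \<and> u + v = 1" using uv1 by simp
    have e: "fst (u *\<^sub>R p1 + v *\<^sub>R p2) + b = u *\<^sub>R (fst p1 + b) + v *\<^sub>R (fst p2 + b)"
      using uv by (simp add: algebra_simps flip: scaleR_add_left)
    have "\<phi> (u *\<^sub>R (fst p1 + b) + v *\<^sub>R (fst p2 + b)) \<le> u * \<phi> (fst p1 + b) + v * \<phi> (fst p2 + b)"
      using cv uv by (auto simp: convex_on_def)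
    also have "\<dots> < u * (snd p1 + \<phi> b) + v * (snd p2 + \<phi> b)"
    proof (cases "u = 0")
      case True thus ?thesis using uv p2 by simp
    next
      case False
      hence "u * \<phi> (fst p1 + b) < u * (snd p1 + \<phi> b)" using uv p1 by simp
      moreover have "v * \<phi> (fst p2 + b) \<le> v * (snd p2 + \<phi> b)" using uv p2
        by (intro mult_left_mono) auto
      ultimately show ?thesis by linarith
    qed
    also have "\<dots> = snd (u *\<^sub>R p1 + v *\<^sub>R p2) + \<phi> b"
      using uv by (simp add: algebra_simps flip: distrib_right)
    finally show "u *\<^sub>R p1 + v *\<^sub>R p2 \<in> S"
      using e unfolding S_def by simp
  qed
  moreover have "0 \<notin> S" unfolding S_def by simp
  ultimately obtain a where a: "a \<noteq> 0" "\<forall>p\<in>S. 0 \<le> inner a p"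
    using separating_hyperplane_set_0 by blast
  obtain v c where ac: "a = (v, c)" by (cases a)
  have key: "0 \<le> v \<bullet> (z - b) + c * (s - \<phi> b)" if "\<phi> z < s" for z s
  proof -
    have "(z - b, s - \<phi> b) \<in> S" using that unfolding S_def by simp
    thus ?thesis using a(2) ac by fastforce
  qed
  have c0: "0 \<le> c" using key[of b "\<phi> b + 1"] by simp
  have cpos: "0 < c"
  proof (rule ccontr)
    assume "\<not> 0 < c"
    hence "c = 0" using c0 by simp
    hence "0 \<le> v \<bullet> ((b - v) - b)" using key[of "b - v" "\<phi> (b - v) + 1"] by simp
    hence "v \<bullet> v = 0" using inner_ge_zero[of v] by simp
    hence "v = 0" by simp
    thus False using a(1) ac \<open>c = 0\<close> by (simp add: zero_prod_def)
  qed
  show ?thesis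
  proof (intro exI allI)
    fix z
    have "\<phi> b + (-(1/c) *\<^sub>R v) \<bullet> (z - b) \<le> \<phi> z + e" if "e > 0" for e
    proof -
      have "0 \<le> v \<bullet> (z - b) + c * (\<phi> z + e - \<phi> b)" using key[of z "\<phi> z + e"] that by simp
      hence "0 \<le> (v \<bullet> (z - b)) / c + (\<phi> z + e - \<phi> b)" using cpos
        by (simp add: field_simps)
      thus ?thesis by simp
    qed
    thus "\<phi> b + (-(1/c) *\<^sub>R v) \<bullet> (z - b) \<le> \<phi> z" by (rule field_le_epsilon)
  qed
qed

lemma jensen_vec:
  fixes \<phi> :: "'a::euclidean_space \<Rightarrow> real" and w :: "'a \<Rightarrow> real"
  assumes cv: "convex_on UNIV \<phi>" and w: "\<And>z. 0 \<le> w z" and iw: "integrable M w"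
    and iz: "integrable M (\<lambda>z. w z *\<^sub>R z)" and ip: "integrable M (\<lambda>z. w z * \<phi> z)"
    and m: "integral\<^sup>L M w = m" "m > 0"
  shows "m * \<phi> ((1/m) *\<^sub>R integral\<^sup>L M (\<lambda>z. w z *\<^sub>R z)) \<le> integral\<^sup>L M (\<lambda>z. w z * \<phi> z)"
proof -
  define b where "b = (1/m) *\<^sub>R integral\<^sup>L M (\<lambda>z. w z *\<^sub>R z)"
  obtain v where v: "\<And>z. \<phi> b + v \<bullet> (z - b) \<le> \<phi> z" using convex_subgrad[OF cv] by blast
  have pt: "w z * \<phi> b + v \<bullet> (w z *\<^sub>R z) - w z * (v \<bullet> b) \<le> w z * \<phi> z" for z
  proof -
    have "w z * (\<phi> b + v \<bullet> (z - b)) \<le> w z * \<phi> z" using v w by (intro mult_left_mono) auto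
    thus ?thesis by (simp add: algebra_simps inner_diff_right)
  qed
  have i1: "integrable M (\<lambda>z. v \<bullet> (w z *\<^sub>R z))" using iz by (rule integrable_inner_right)
  have i2: "integrable M (\<lambda>z. w z * \<phi> b)" using iw by (rule integrable_mult_left)
  have i3: "integrable M (\<lambda>z. w z * (v \<bullet> b))" using iw by (rule integrable_mult_left)
  have iall: "integrable M (\<lambda>z. w z * \<phi> b + v \<bullet> (w z *\<^sub>R z) - w z * (v \<bullet> b))"
    by (rule Bochner_Integration.integrable_diff[OF Bochner_Integration.integrable_add[OF i2 i1] i3])
  have "integral\<^sup>L M (\<lambda>z. w z * \<phi> b + v \<bullet> (w z *\<^sub>R z) - w z * (v \<bullet> b))
        \<le> integral\<^sup>L M (\<lambda>z. w z * \<phi> z)"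
    by (rule integral_mono[OF iall ip pt])
  moreover have "integral\<^sup>L M (\<lambda>z. w z * \<phi> b + v \<bullet> (w z *\<^sub>R z) - w z * (v \<bullet> b))
      = m * \<phi> b + v \<bullet> integral\<^sup>L M (\<lambda>z. w z *\<^sub>R z) - m * (v \<bullet> b)"
    unfolding Bochner_Integration.integral_diff[OF Bochner_Integration.integrable_add[OF i2 i1] i3] Bochner_Integration.integral_add[OF i2 i1]
        Bochner_Integration.integral_mult_left[OF iw] integral_inner_right[OF iz] m(1) by simp
  moreover have "v \<bullet> integral\<^sup>L M (\<lambda>z. w z *\<^sub>R z) = m * (v \<bullet> b)"
    using m(2) unfolding b_def inner_scaleR_right by simp
  ultimately have "m * \<phi> b \<le> integral\<^sup>L M (\<lambda>z. w z * \<phi> z)" by linarith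
  thus ?thesis unfolding b_def .
qed

lemma msupp_AE:
  fixes M :: "'a::euclidean_space measure"
  assumes sb: "sets M = sets borel"
  shows "AE x in M. x \<in> msupp M"
proof -
  define F where "F = {ball x e | x e. e > 0 \<and> emeasure M (ball x e) = 0}"
  have "\<And>S. S \<in> F \<Longrightarrow> open S" unfolding F_def by blast
  then obtain F' where F': "F' \<subseteq> F" "countable F'" "\<Union>F' = \<Union>F" by (rule Lindelof)
  have nF: "S \<in> null_sets M" if SF: "S \<in> F" for S
  proof -
    obtain x e where "S = ball x e" "emeasure M (ball x e) = 0" using SF unfolding F_def by blast
    moreover have "ball x e \<in> sets M" using sb by simp
    ultimately show ?thesis by (simp add: null_sets_def)
  qed
  have "(\<Union>S\<in>F'. S) \<in> null_sets M"
    using F' nF by (intro null_sets_UN') auto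
  moreover have "{x \<in> space M. x \<notin> msupp M} \<subseteq> (\<Union>S\<in>F'. S)"
  proof
    fix x assume "x \<in> {x \<in> space M. x \<notin> msupp M}"
    then obtain e where "e > 0" "\<not> emeasure M (ball x e) > 0" unfolding msupp_def by auto
    hence "ball x e \<in> F" unfolding F_def by auto
    hence "x \<in> \<Union>F" using \<open>e > 0\<close> centre_in_ball by blast
    thus "x \<in> (\<Union>S\<in>F'. S)" using F' by auto
  qed
  ultimately show ?thesis by (rule AE_I')
qed

lemma msupp_nonempty:
  fixes M :: "'a::euclidean_space measure"
  assumes "prob_space M" "sets M = sets borel"
  shows "msupp M \<noteq> {}"
proof
  assume "msupp M = {}"
  hence "AE x in M. False" using msupp_AE[OF assms(2)] by simp
  thus False using prob_space.AE_False[OF assms(1)] by simp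
qed

lemma meas_transfer:
  assumes "sets M = sets borel" "f \<in> borel_measurable borel"
  shows "f \<in> borel_measurable M"
  by (simp only: measurable_cong_sets[OF assms(1) refl] assms(2))

lemma exp_abs_bound:
  fixes s c0 :: real assumes "c0 \<le> s"
  shows "exp (- s) * \<bar>s\<bar> \<le> exp (- c0) * (1 + \<bar>c0\<bar>)"
proof -
  have u: "(s - c0) \<le> exp (s - c0)" using exp_ge_add_one_self[of "s - c0"] by linarith
  have "exp (- s) * (s - c0) = exp (- c0) * (exp (- (s - c0)) * (s - c0))"
    by (simp add: exp_diff exp_minus field_simps)
  also have "exp (- (s - c0)) * (s - c0) \<le> 1"
  proof -
    have "exp (- (s - c0)) * (s - c0) \<le> exp (- (s - c0)) * exp (s - c0)"
      using u by (intro mult_left_mono) auto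
    also have "\<dots> = 1" by (simp add: exp_add[symmetric])
    finally show ?thesis .
  qed
  hence "exp (- c0) * (exp (- (s - c0)) * (s - c0)) \<le> exp (- c0) * 1"
    by (intro mult_left_mono) auto
  finally have A: "exp (- s) * (s - c0) \<le> exp (- c0)" by simp
  have B: "exp (- s) * \<bar>c0\<bar> \<le> exp (- c0) * \<bar>c0\<bar>"
    using assms by (intro mult_right_mono) auto
  have "\<bar>s\<bar> \<le> (s - c0) + \<bar>c0\<bar>" using assms by linarith
  hence "exp (- s) * \<bar>s\<bar> \<le> exp (- s) * ((s - c0) + \<bar>c0\<bar>)" by (intro mult_left_mono) auto
  also have "\<dots> \<le> exp (- c0) + exp (- c0) * \<bar>c0\<bar>" using A B by (simp add: algebra_simps)
  finally show ?thesis by (simp add: algebra_simps)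
qed


lemma part_a:
  fixes M :: "'a::euclidean_space measure" and D :: real and \<phi> :: "'a \<Rightarrow> real"
  assumes P: "prob_space M" and sb: "sets M = sets borel" and D: "D > 0"
    and diam: "\<forall>x\<in>msupp M. \<forall>y\<in>msupp M. norm (x - y) \<le> D"
    and cv: "convex_on UNIV \<phi>" and bb: "bdd_below (range \<phi>)"
  shows "(\<integral>\<^sup>+ x. ennreal (exp (real_of_ereal (Q1 D \<phi> x))) \<partial>M) *
       (\<integral>\<^sup>+ x. ennreal (exp (- \<phi> x)) \<partial>M) \<le> 1"
proof -
  interpret prob_space M by (rule P)
  obtain c0 where c0: "\<And>y. c0 \<le> \<phi> y" using bb by (auto simp: bdd_below_def)
  have cont: "continuous_on UNIV \<phi>" by (rule convex_on_continuous[OF open_UNIV cv])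
  have phim: "\<phi> \<in> borel_measurable M"
    by (rule meas_transfer[OF sb borel_measurable_continuous_onI[OF cont]])
  define q where "q x = real_of_ereal (Q1 D \<phi> x)" for x
  have qm: "q \<in> borel_measurable M"
    unfolding q_def by (rule meas_transfer[OF sb Q1_measurable[OF D c0 cont]])
  have idm: "(\<lambda>z::'a. z) \<in> borel_measurable M" by (rule meas_transfer[OF sb]) simp
  define K where "K = msupp M"
  have AEK: "AE x in M. x \<in> K" unfolding K_def by (rule msupp_AE[OF sb])
  obtain x0 where x0: "x0 \<in> K" using msupp_nonempty[OF P sb] unfolding K_def by blast
  have Kd: "norm (x - y) \<le> D" if "x \<in> K" "y \<in> K" for x y using diam that unfolding K_def by blast
  have qlo: "c0 \<le> q x" for x unfolding q_def by (rule Q1_real(2)[OF D c0])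
  have qle: "q x \<le> \<phi> x" for x unfolding q_def by (rule Q1_real(3)[OF D c0])
  have qhi: "q x \<le> \<phi> x0 + 1/4" if "x \<in> K" for x
  proof -
    have "q x \<le> \<phi> x0 + (norm (x - x0))\<^sup>2 / (4 * D\<^sup>2)"
      unfolding q_def by (rule Q1_upper[OF D c0 Kd[OF that x0]])
    also have "(norm (x - x0))\<^sup>2 / (4 * D\<^sup>2) \<le> D\<^sup>2 / (4 * D\<^sup>2)"
      using Kd[OF that x0] by (intro divide_right_mono power_mono) auto
    also have "D\<^sup>2 / (4 * D\<^sup>2) = 1/4" using D by simp
    finally show ?thesis by simp
  qed
  have ieq: "integrable M (\<lambda>x. exp (q x))"
  proof (rule integrable_const_bound[where B="exp (\<phi> x0 + 1/4)"])
    show "AE x in M. norm (exp (q x)) \<le> exp (\<phi> x0 + 1/4)"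
      using AEK by eventually_elim (use qhi in auto)
  qed (use qm in simp)
  have iep: "integrable M (\<lambda>x. exp (- \<phi> x))"
  proof (rule integrable_const_bound[where B="exp (- c0)"])
    show "AE x in M. norm (exp (- \<phi> x)) \<le> exp (- c0)"
      using c0 by simp
  qed (use phim in simp)
  define F where "F = integral\<^sup>L M (\<lambda>x. exp (q x))"
  define Z where "Z = integral\<^sup>L M (\<lambda>x. exp (- \<phi> x))"
  have Fpos: "F > 0"
  proof -
    have "F \<ge> 0" unfolding F_def by (intro Bochner_Integration.integral_nonneg) auto
    moreover have "F \<noteq> 0"
    proof
      assume "F = 0"
      hence "AE x in M. exp (q x) = 0"
        using integral_nonneg_eq_0_iff_AE[OF ieq] unfolding F_def by simp
      thus False by simp
    qed
    ultimately show ?thesis by simp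
  qed
  have Zpos: "Z > 0"
  proof -
    have "Z \<ge> 0" unfolding Z_def by (intro Bochner_Integration.integral_nonneg) auto
    moreover have "Z \<noteq> 0"
    proof
      assume "Z = 0"
      hence "AE x in M. exp (- \<phi> x) = 0"
        using integral_nonneg_eq_0_iff_AE[OF iep] unfolding Z_def by simp
      thus False by simp
    qed
    ultimately show ?thesis by simp
  qed
  define g1 where "g1 x = exp (q x) / F" for x
  define g2 where "g2 x = exp (- \<phi> x) / Z" for x
  define N where "N x = max (g1 x - g2 x) 0" for x
  define Pf where "Pf x = max (g2 x - g1 x) 0" for x
  have ig1: "integrable M g1" unfolding g1_def using ieq by simp
  have ig2: "integrable M g2" unfolding g2_def using iep by simp
  have int_g1: "integral\<^sup>L M g1 = 1" unfolding g1_def F_def using Fpos F_def by simp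
  have int_g2: "integral\<^sup>L M g2 = 1" unfolding g2_def Z_def using Zpos Z_def by simp
  have iN: "integrable M N" unfolding N_def using ig1 ig2 by (intro integrable_max) auto
  have iP: "integrable M Pf" unfolding Pf_def using ig1 ig2 by (intro integrable_max) auto
  have g1p: "g1 x > 0" for x unfolding g1_def using Fpos by simp
  have g2p: "g2 x > 0" for x unfolding g2_def using Zpos by simp
  have NP: "N x - Pf x = g1 x - g2 x" for x unfolding N_def Pf_def by auto
  have Pg2: "Pf x \<le> g2 x" for x unfolding Pf_def using g1p[of x] g2p[of x] by auto
  have P0: "0 \<le> Pf x" for x unfolding Pf_def by auto
  define m where "m = integral\<^sup>L M Pf"
  have intN: "integral\<^sup>L M N = m"
  proof -
    have "integral\<^sup>L M (\<lambda>x. N x - Pf x) = integral\<^sup>L M (\<lambda>x. g1 x - g2 x)" using NP by simp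
    thus ?thesis using iN iP ig1 ig2 int_g1 int_g2 unfolding m_def by simp
  qed
  have m0: "0 \<le> m" unfolding m_def using P0 by (intro Bochner_Integration.integral_nonneg) auto
  have g2m: "g2 \<in> borel_measurable M" using ig2 by auto
  have g1m: "g1 \<in> borel_measurable M" using ig1 by auto
  have Pm: "Pf \<in> borel_measurable M" using iP by auto
  have iPphi: "integrable M (\<lambda>x. Pf x * \<phi> x)"
  proof (rule integrable_const_bound[where B="exp (- c0) * (1 + \<bar>c0\<bar>) / Z"])
    show "AE x in M. norm (Pf x * \<phi> x) \<le> exp (- c0) * (1 + \<bar>c0\<bar>) / Z"
    proof (intro AE_I2)
      fix x
      have "norm (Pf x * \<phi> x) = Pf x * \<bar>\<phi> x\<bar>" using P0[of x] by (simp add: abs_mult)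
      also have "\<dots> \<le> g2 x * \<bar>\<phi> x\<bar>" using Pg2[of x] by (intro mult_right_mono) auto
      also have "\<dots> = (exp (- \<phi> x) * \<bar>\<phi> x\<bar>) / Z" unfolding g2_def by simp
      also have "\<dots> \<le> exp (- c0) * (1 + \<bar>c0\<bar>) / Z"
        using exp_abs_bound[OF c0[of x]] Zpos by (intro divide_right_mono) auto
      finally show "norm (Pf x * \<phi> x) \<le> exp (- c0) * (1 + \<bar>c0\<bar>) / Z" .
    qed
  qed (use Pm phim in simp)
  have iPz: "integrable M (\<lambda>z. Pf z *\<^sub>R z)"
  proof (rule integrable_const_bound[where B="exp (- c0) / Z * (norm x0 + D)"])
    show "AE x in M. norm (Pf x *\<^sub>R x) \<le> exp (- c0) / Z * (norm x0 + D)"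
      using AEK
    proof eventually_elim
      case (elim x)
      have "norm x \<le> norm x0 + D" using Kd[OF elim x0] norm_triangle_sub[of x x0] by linarith
      moreover have "Pf x \<le> exp (- c0) / Z"
        using Pg2[of x] c0[of x] Zpos unfolding g2_def by (smt (verit) divide_right_mono exp_le_cancel_iff)
      ultimately have "Pf x * norm x \<le> exp (- c0) / Z * (norm x0 + D)"
        using P0[of x] by (intro mult_mono) auto
      thus ?case using P0[of x] by simp
    qed
  qed (use Pm idm in simp)
  have bex: "\<exists>b. (\<forall>x\<in>K. norm (x - b) \<le> D) \<and> m * \<phi> b \<le> integral\<^sup>L M (\<lambda>x. Pf x * \<phi> x)"
  proof (cases "m = 0")
    case True
    have "AE x in M. Pf x = 0"
      using integral_nonneg_eq_0_iff_AE[OF iP] P0 True unfolding m_def by simp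
    hence "integral\<^sup>L M (\<lambda>x. Pf x * \<phi> x) = integral\<^sup>L M (\<lambda>x. 0)"
      by (intro integral_cong_AE) (auto simp: borel_measurable_integrable[OF iPphi])
    hence "m * \<phi> x0 \<le> integral\<^sup>L M (\<lambda>x. Pf x * \<phi> x)" using True by simp
    moreover have "\<forall>x\<in>K. norm (x - x0) \<le> D" using Kd x0 by blast
    ultimately show ?thesis by blast
  next
    case False
    hence mpos: "m > 0" using m0 by simp
    define I where "I = integral\<^sup>L M (\<lambda>z. Pf z *\<^sub>R z)"
    define b where "b = (1/m) *\<^sub>R I"
    have J: "m * \<phi> b \<le> integral\<^sup>L M (\<lambda>x. Pf x * \<phi> x)"
      unfolding b_def I_def by (rule jensen_vec[OF cv P0 iP iPz iPphi m_def[symmetric] mpos])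
    have "norm (x - b) \<le> D" if xK: "x \<in> K" for x
    proof -
      have i1: "integrable M (\<lambda>z. Pf z *\<^sub>R x)" using iP by (rule integrable_scaleR_left)
      have e: "integral\<^sup>L M (\<lambda>z. Pf z *\<^sub>R x - Pf z *\<^sub>R z) = m *\<^sub>R x - I"
        unfolding I_def using i1 iPz iP by (simp add: m_def)
      have "x - b = (1/m) *\<^sub>R (m *\<^sub>R x - I)" unfolding b_def using mpos by (simp add: algebra_simps)
      hence "norm (x - b) = (1/m) * norm (integral\<^sup>L M (\<lambda>z. Pf z *\<^sub>R x - Pf z *\<^sub>R z))"
        using mpos e by simp
      also have "\<dots> \<le> (1/m) * integral\<^sup>L M (\<lambda>z. norm (Pf z *\<^sub>R x - Pf z *\<^sub>R z))"
        using mpos by (intro mult_left_mono integral_norm_bound) auto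
      also have "integral\<^sup>L M (\<lambda>z. norm (Pf z *\<^sub>R x - Pf z *\<^sub>R z)) \<le> integral\<^sup>L M (\<lambda>z. Pf z * D)"
      proof (rule integral_mono_AE)
        show "integrable M (\<lambda>z. norm (Pf z *\<^sub>R x - Pf z *\<^sub>R z))" using i1 iPz by auto
        show "integrable M (\<lambda>z. Pf z * D)" using iP by auto
        show "AE z in M. norm (Pf z *\<^sub>R x - Pf z *\<^sub>R z) \<le> Pf z * D"
          using AEK
        proof eventually_elim
          case (elim z)
          have "norm (Pf z *\<^sub>R x - Pf z *\<^sub>R z) = Pf z * norm (x - z)"
            using P0[of z] by (simp flip: scaleR_diff_right)
          also have "\<dots> \<le> Pf z * D" using Kd[OF xK elim] P0[of z] by (intro mult_left_mono) auto
          finally show ?case .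
        qed
      qed
      hence "(1/m) * integral\<^sup>L M (\<lambda>z. norm (Pf z *\<^sub>R x - Pf z *\<^sub>R z)) \<le> (1/m) * integral\<^sup>L M (\<lambda>z. Pf z * D)"
        using mpos by (intro mult_left_mono) auto
      also have "\<dots> = D" using mpos unfolding m_def by simp
      finally show ?thesis .
    qed
    thus ?thesis using J by blast
  qed
  then obtain b where bK: "\<And>x. x \<in> K \<Longrightarrow> norm (x - b) \<le> D"
    and bJ: "m * \<phi> b \<le> integral\<^sup>L M (\<lambda>x. Pf x * \<phi> x)" by blast
  have pw: "AE x in M. ln F * g1 x + ln Z * g2 x \<le> N x * \<phi> b - Pf x * \<phi> x + 2 - g1 x - g2 x"
    using AEK
  proof eventually_elim
    case (elim x)
    show ?case using pointwise_key[OF D c0 cv bK[OF elim] Fpos Zpos]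
      unfolding g1_def g2_def N_def Pf_def q_def .
  qed
  have iL: "integrable M (\<lambda>x. ln F * g1 x + ln Z * g2 x)" using ig1 ig2 by auto
  have iR: "integrable M (\<lambda>x. N x * \<phi> b - Pf x * \<phi> x + 2 - g1 x - g2 x)"
    using iN iPphi ig1 ig2 by auto
  have "integral\<^sup>L M (\<lambda>x. ln F * g1 x + ln Z * g2 x)
      \<le> integral\<^sup>L M (\<lambda>x. N x * \<phi> b - Pf x * \<phi> x + 2 - g1 x - g2 x)"
    by (rule integral_mono_AE[OF iL iR pw])
  moreover have "integral\<^sup>L M (\<lambda>x. ln F * g1 x + ln Z * g2 x) = ln F + ln Z"
    using ig1 ig2 int_g1 int_g2 by simp
  moreover have "integral\<^sup>L M (\<lambda>x. N x * \<phi> b - Pf x * \<phi> x + 2 - g1 x - g2 x)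
      = m * \<phi> b - integral\<^sup>L M (\<lambda>x. Pf x * \<phi> x)"
    using iN iPphi ig1 ig2 int_g1 int_g2 intN by (simp add: prob_space)
  ultimately have "ln F + ln Z \<le> 0" using bJ by linarith
  hence "ln (F * Z) \<le> 0" using Fpos Zpos by (simp add: ln_mult)
  hence FZ: "F * Z \<le> 1" using Fpos Zpos by simp
  have e1: "(\<integral>\<^sup>+ x. ennreal (exp (q x)) \<partial>M) = ennreal F"
    unfolding F_def by (rule nn_integral_eq_integral[OF ieq]) simp
  have e2: "(\<integral>\<^sup>+ x. ennreal (exp (- \<phi> x)) \<partial>M) = ennreal Z"
    unfolding Z_def by (rule nn_integral_eq_integral[OF iep]) simp
  show ?thesis unfolding q_def[symmetric] e1 e2
    using FZ Fpos Zpos by (simp add: ennreal_mult[symmetric])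
qed


lemma ramp_convex:
  fixes u x0 :: "'a::euclidean_space"
  assumes "a \<ge> 0"
  shows "convex_on UNIV (\<lambda>z. a * max (u \<bullet> (z - x0) - e) 0)"
proof (rule convex_onI)
  fix t :: real and x y :: 'a assume t: "t > 0" "t < 1"
  have l: "u \<bullet> ((1 - t) *\<^sub>R x + t *\<^sub>R y - x0) - e = (1 - t) * (u \<bullet> (x - x0) - e) + t * (u \<bullet> (y - x0) - e)"
    by (simp add: algebra_simps inner_add_right inner_diff_right)
  have "max ((1 - t) * (u \<bullet> (x - x0) - e) + t * (u \<bullet> (y - x0) - e)) 0
      \<le> (1 - t) * max (u \<bullet> (x - x0) - e) 0 + t * max (u \<bullet> (y - x0) - e) 0"
  proof -
    have "(1 - t) * (u \<bullet> (x - x0) - e) \<le> (1 - t) * max (u \<bullet> (x - x0) - e) 0"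
      using t by (intro mult_left_mono) auto
    moreover have "t * (u \<bullet> (y - x0) - e) \<le> t * max (u \<bullet> (y - x0) - e) 0"
      using t by (intro mult_left_mono) auto
    moreover have "0 \<le> (1 - t) * max (u \<bullet> (x - x0) - e) 0" using t by simp
    moreover have "0 \<le> t * max (u \<bullet> (y - x0) - e) 0" using t by simp
    ultimately show ?thesis by linarith
  qed
  hence "a * max (u \<bullet> ((1 - t) *\<^sub>R x + t *\<^sub>R y - x0) - e) 0
      \<le> a * ((1 - t) * max (u \<bullet> (x - x0) - e) 0 + t * max (u \<bullet> (y - x0) - e) 0)"
    unfolding l using assms by (intro mult_left_mono) auto
  thus "a * max (u \<bullet> ((1 - t) *\<^sub>R x + t *\<^sub>R y - x0) - e) 0
      \<le> (1 - t) * (a * max (u \<bullet> (x - x0) - e) 0) + t * (a * max (u \<bullet> (y - x0) - e) 0)"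
    by (simp add: algebra_simps)
qed simp

lemma part_b:
  fixes M :: "'a::euclidean_space measure" and D :: real
  assumes P: "prob_space M" and sb: "sets M = sets borel" and D: "D > 0"
    and H: "\<forall>\<phi> :: 'a \<Rightarrow> real. convex_on UNIV \<phi> \<longrightarrow> bdd_below (range \<phi>) \<longrightarrow>
       (\<integral>\<^sup>+ x. ennreal (exp (real_of_ereal (Q1 D \<phi> x))) \<partial>M) *
       (\<integral>\<^sup>+ x. ennreal (exp (- \<phi> x)) \<partial>M) \<le> 1"
    and x0: "x0 \<in> msupp M" and y0: "y0 \<in> msupp M"
  shows "norm (x0 - y0) \<le> D"
proof (rule ccontr)
  interpret prob_space M by (rule P)
  assume "\<not> norm (x0 - y0) \<le> D"
  define R where "R = norm (y0 - x0)"
  have RD: "R > D" using \<open>\<not> norm (x0 - y0) \<le> D\<close> unfolding R_def by (simp add: norm_minus_commute)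
  define \<delta> where "\<delta> = R - D"
  have dpos: "\<delta> > 0" unfolding \<delta>_def using RD by simp
  define e where "e = \<delta> / 4"
  have epos: "e > 0" unfolding e_def using dpos by simp
  define u where "u = (1 / R) *\<^sub>R (y0 - x0)"
  have Rpos: "R > 0" using RD D by simp
  have nu: "norm u = 1" unfolding u_def using Rpos R_def by simp
  have uy: "u \<bullet> (y0 - x0) = R" unfolding u_def R_def using Rpos R_def
    by (simp add: dot_square_norm power2_eq_square)
  have cs: "\<bar>u \<bullet> w\<bar> \<le> norm w" for w using Cauchy_Schwarz_ineq2[of u w] nu by simp
  define p1 where "p1 = measure M (ball x0 e)"
  define p2 where "p2 = measure M (ball y0 e)"
  have ep1: "emeasure M (ball x0 e) = ennreal p1" unfolding p1_def by (rule emeasure_eq_measure)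
  have ep2: "emeasure M (ball y0 e) = ennreal p2" unfolding p2_def by (rule emeasure_eq_measure)
  have p1pos: "p1 > 0"
  proof -
    have "0 < emeasure M (ball x0 e)" using x0 epos unfolding msupp_def by blast
    hence "0 < ennreal p1" using ep1 by simp
    thus ?thesis by simp
  qed
  have p2pos: "p2 > 0"
  proof -
    have "0 < emeasure M (ball y0 e)" using y0 epos unfolding msupp_def by blast
    hence "0 < ennreal p2" using ep2 by simp
    thus ?thesis by simp
  qed
  define a where "a = 2 / (\<delta> * p1 * p2)"
  have apos: "a > 0" unfolding a_def using dpos p1pos p2pos by simp
  define \<phi> where "\<phi> z = a * max (u \<bullet> (z - x0) - e) 0" for z
  have cv: "convex_on UNIV \<phi>" unfolding \<phi>_def[abs_def] using apos by (intro ramp_convex) simp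
  have phi0: "\<And>y. 0 \<le> \<phi> y" unfolding \<phi>_def using apos by simp
  have bb: "bdd_below (range \<phi>)" using phi0 by (intro bdd_belowI2[of _ 0]) simp
  have HH: "(\<integral>\<^sup>+ x. ennreal (exp (real_of_ereal (Q1 D \<phi> x))) \<partial>M) *
       (\<integral>\<^sup>+ x. ennreal (exp (- \<phi> x)) \<partial>M) \<le> 1" using H cv bb by blast
  have Qlow: "a * \<delta> / 2 \<le> real_of_ereal (Q1 D \<phi> z)" if z: "z \<in> ball y0 e" for z
  proof -
    have uz: "u \<bullet> (z - x0) > D + \<delta> - e"
    proof -
      have "u \<bullet> (z - x0) = u \<bullet> (y0 - x0) + u \<bullet> (z - y0)" by (simp add: inner_diff_right)
      moreover have "\<bar>u \<bullet> (z - y0)\<bar> < e" using cs[of "z - y0"] z by (simp add: dist_norm norm_minus_commute)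
      ultimately show ?thesis using uy unfolding \<delta>_def by linarith
    qed
    have "ereal (a * \<delta> / 2) \<le> Q1 D \<phi> z"
      unfolding Q1_def
    proof (rule INF_greatest)
      fix y
      show "ereal (a * \<delta> / 2) \<le> ereal (\<phi> y) + theta D (z - y)"
      proof (cases "norm (z - y) \<le> D")
        case False thus ?thesis unfolding theta_def by simp
      next
        case True
        have "u \<bullet> (y - x0) = u \<bullet> (z - x0) - u \<bullet> (z - y)" by (simp add: inner_diff_right)
        hence "u \<bullet> (y - x0) - e \<ge> \<delta> / 2"
          using cs[of "z - y"] True uz unfolding e_def by linarith
        hence "\<delta> / 2 \<le> max (u \<bullet> (y - x0) - e) 0" by linarith
        hence "a * (\<delta> / 2) \<le> \<phi> y" unfolding \<phi>_def using apos
          by (intro mult_left_mono) auto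
        moreover have "0 \<le> theta D (z - y)" by (rule theta_nonneg)
        ultimately show ?thesis by (simp add: add_increasing2)
      qed
    qed
    thus ?thesis using Q1_real(1)[of D 0 \<phi> z] D phi0 by (metis ereal_less_eq(3))
  qed
  have I1: "ennreal (exp (a * \<delta> / 2)) * ennreal p2 \<le> (\<integral>\<^sup>+ x. ennreal (exp (real_of_ereal (Q1 D \<phi> x))) \<partial>M)"
  proof -
    have "ennreal (exp (a * \<delta> / 2)) * ennreal p2 = (\<integral>\<^sup>+ x. ennreal (exp (a * \<delta> / 2)) * indicator (ball y0 e) x \<partial>M)"
      using ep2 sb by (simp add: nn_integral_cmult_indicator)
    also have "\<dots> \<le> (\<integral>\<^sup>+ x. ennreal (exp (real_of_ereal (Q1 D \<phi> x))) \<partial>M)"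
    proof (rule nn_integral_mono)
      fix x
      show "ennreal (exp (a * \<delta> / 2)) * indicator (ball y0 e) x \<le> ennreal (exp (real_of_ereal (Q1 D \<phi> x)))"
        using Qlow[of x] by (cases "x \<in> ball y0 e") (auto simp: indicator_def)
    qed
    finally show ?thesis .
  qed
  have I2: "ennreal p1 \<le> (\<integral>\<^sup>+ x. ennreal (exp (- \<phi> x)) \<partial>M)"
  proof -
    have "ennreal p1 = (\<integral>\<^sup>+ x. indicator (ball x0 e) x \<partial>M)"
      using ep1 sb by simp
    also have "\<dots> \<le> (\<integral>\<^sup>+ x. ennreal (exp (- \<phi> x)) \<partial>M)"
    proof (rule nn_integral_mono)
      fix x
      have "\<phi> x = 0" if "x \<in> ball x0 e"
      proof -
        have "u \<bullet> (x - x0) < e" using cs[of "x - x0"] that by (simp add: dist_norm norm_minus_commute)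
        thus ?thesis unfolding \<phi>_def by simp
      qed
      thus "indicator (ball x0 e) x \<le> ennreal (exp (- \<phi> x))"
        by (cases "x \<in> ball x0 e") (auto simp: indicator_def)
    qed
    finally show ?thesis .
  qed
  have "ennreal (exp (a * \<delta> / 2)) * ennreal p2 * ennreal p1 \<le> 1"
    using HH I1 I2 by (meson mult_mono order_trans zero_le)
  hence le1: "exp (a * \<delta> / 2) * p2 * p1 \<le> 1"
    using p1pos p2pos by (simp add: ennreal_mult[symmetric] ennreal_le_1)
  have "exp (a * \<delta> / 2) \<ge> 1 + a * \<delta> / 2" by (rule exp_ge_add_one_self)
  moreover have "a * \<delta> / 2 = 1 / (p1 * p2)"
    unfolding a_def using dpos p1pos p2pos by (simp add: field_simps)
  ultimately have "exp (a * \<delta> / 2) > 1 / (p1 * p2)" by linarith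
  hence "exp (a * \<delta> / 2) * (p2 * p1) > 1" using p1pos p2pos by (simp add: field_simps)
  thus False using le1 by (simp add: mult.assoc)
qed

theorem lemma3p2:
  fixes M :: "'a::euclidean_space measure" and D :: real
  assumes "prob_space M" and "sets M = sets borel" and "D > 0"
  shows "(\<forall>x\<in>msupp M. \<forall>y\<in>msupp M. norm (x - y) \<le> D) \<longleftrightarrow>
    (\<forall>\<phi> :: 'a \<Rightarrow> real. convex_on UNIV \<phi> \<longrightarrow> bdd_below (range \<phi>) \<longrightarrow>
       (\<integral>\<^sup>+ x. ennreal (exp (real_of_ereal (Q1 D \<phi> x))) \<partial>M) *
       (\<integral>\<^sup>+ x. ennreal (exp (- \<phi> x)) \<partial>M) \<le> 1)"
proof
  assume A: "\<forall>x\<in>msupp M. \<forall>y\<in>msupp M. norm (x - y) \<le> D"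
  show "\<forall>\<phi> :: 'a \<Rightarrow> real. convex_on UNIV \<phi> \<longrightarrow> bdd_below (range \<phi>) \<longrightarrow>
       (\<integral>\<^sup>+ x. ennreal (exp (real_of_ereal (Q1 D \<phi> x))) \<partial>M) *
       (\<integral>\<^sup>+ x. ennreal (exp (- \<phi> x)) \<partial>M) \<le> 1"
  proof (intro allI impI)
    fix \<phi> :: "'a \<Rightarrow> real"
    assume cv: "convex_on UNIV \<phi>" and bb: "bdd_below (range \<phi>)"
    show "(\<integral>\<^sup>+ x. ennreal (exp (real_of_ereal (Q1 D \<phi> x))) \<partial>M) *
       (\<integral>\<^sup>+ x. ennreal (exp (- \<phi> x)) \<partial>M) \<le> 1"
      by (rule part_a[OF assms A cv bb])
  qed
next
  assume H: "\<forall>\<phi> :: 'a \<Rightarrow> real. convex_on UNIV \<phi> \<longrightarrow> bdd_below (range \<phi>) \<longrightarrow>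
       (\<integral>\<^sup>+ x. ennreal (exp (real_of_ereal (Q1 D \<phi> x))) \<partial>M) *
       (\<integral>\<^sup>+ x. ennreal (exp (- \<phi> x)) \<partial>M) \<le> 1"
  show "\<forall>x\<in>msupp M. \<forall>y\<in>msupp M. norm (x - y) \<le> D"
  proof (intro ballI)
    fix x y assume "x \<in> msupp M" "y \<in> msupp M"
    thus "norm (x - y) \<le> D" by (rule part_b[OF assms H])
  qed
qed

end
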